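(* Let $\lambda>0$ and $\overline{S}_{\lambda}=\{z\in\mathbb{S}: d_{\mathbb{S}}(z,0)\leqslant\lambda\}$. Then $$\max\{|z|: z\in\overline{S}_{\lambda}\}=\frac{2}{\pi}\lambda.$$
   Context: $\mathbb{S}=\{z\in\mathbb{C}:-1<\operatorname{Re} z<1\}$. The hyperbolic density of $\mathbb{S}$ is $\rho_{\mathbb{S}}(z)=\frac{\pi}{2}\big/\cos\left(\frac{\pi}{2}\operatorname{Re} z\right)$ and $d_{\mathbb{S}}(z_1,z_2)=\inf_\gamma\int_\gamma\rho_{\mathbb{S}}(z)|dz|$ over $C^1$ curves $\gamma$ in $\mathbb{S}$ joining $z_1$ to $z_2$. *)

theory Defs
  imports "HOL-Analysis.Analysis"
begin

definition strip :: "complex set" where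
  "strip = {z. -1 < Re z \<and> Re z < 1}"

definition rho_S :: "complex \<Rightarrow> real" where
  "rho_S z = (pi / 2) / cos (pi / 2 * Re z)"

definition C1_curve_in :: "complex set \<Rightarrow> (real \<Rightarrow> complex) \<Rightarrow> complex \<Rightarrow> complex \<Rightarrow> bool" where
  "C1_curve_in A g z1 z2 \<longleftrightarrow>
     (\<exists>D. (\<forall>t\<in>{0..1}. (g has_vector_derivative D t) (at t within {0..1}))
          \<and> continuous_on {0..1} D)
     \<and> g ` {0..1} \<subseteq> A \<and> g 0 = z1 \<and> g 1 = z2"

definition hyp_length_S :: "(real \<Rightarrow> complex) \<Rightarrow> real" where
  "hyp_length_S g =
     integral {0..1} (\<lambda>t. rho_S (g t) * norm (vector_derivative g (at t within {0..1})))"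

definition d_S :: "complex \<Rightarrow> complex \<Rightarrow> real" where
  "d_S z1 z2 = (INF g \<in> {g. C1_curve_in strip g z1 z2}. hyp_length_S g)"

end

theory Submission
  imports Defs
begin

lemma rho_ge:
  assumes "z \<in> strip"
  shows "pi/2 \<le> rho_S z" and "cos (pi / 2 * Re z) > 0"
proof -
  have "-1 < Re z" "Re z < 1" using assms by (auto simp: strip_def)
  then have a: "pi/2 * (-1) < pi/2 * Re z" "pi/2 * Re z < pi/2 * 1"
    by (intro mult_strict_left_mono; simp)+
  show c: "cos (pi / 2 * Re z) > 0" by (rule cos_gt_zero_pi) (use a in auto)
  have "cos (pi / 2 * Re z) \<le> 1" by simp
  then show "pi/2 \<le> rho_S z" unfolding rho_S_def using c
    by (simp add: field_simps)
qed

lemma length_ge: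
  assumes "C1_curve_in strip g a b"
  shows "pi/2 * cmod (b - a) \<le> hyp_length_S g"
proof -
  obtain D where D: "\<And>t. t\<in>{0..1} \<Longrightarrow> (g has_vector_derivative D t) (at t within {0..1})"
    and cD: "continuous_on {0..1} D" and im: "g ` {0..1} \<subseteq> strip" and g0: "g 0 = a" and g1: "g 1 = b"
    using assms unfolding C1_curve_in_def by blast
  have vd: "vector_derivative g (at t within {0..1}) = D t" if "t \<in> {0..1}" for t
    using vector_derivative_within_cbox[of 0 1 t g "D t"] D[OF that] that by simp
  have FT: "(D has_integral (b - a)) {0..1}"
    using fundamental_theorem_of_calculus[of 0 1 g D] D g0 g1 by simp
  have cg: "continuous_on {0..1} g"
    by (meson D continuous_on_eq_continuous_within has_vector_derivative_continuous)
  have crho: "continuous_on {0..1} (\<lambda>t. rho_S (g t))"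
    unfolding rho_S_def
    apply (intro continuous_intros cg)
    using rho_ge(2) im by fastforce
  have int1: "(\<lambda>t. rho_S (g t) * norm (D t)) integrable_on {0..1}"
    by (intro integrable_continuous_interval continuous_intros crho cD)
  have int2: "(\<lambda>t. pi/2 * norm (D t)) integrable_on {0..1}"
    by (intro integrable_continuous_interval continuous_intros cD)
  have "pi/2 * cmod (b - a) = pi/2 * norm (integral {0..1} D)"
    using FT by (simp add: integral_unique)
  also have "\<dots> \<le> pi/2 * integral {0..1} (\<lambda>t. norm (D t))"
    using integral_norm_bound_integral[of D "{0..1}" "\<lambda>t. norm (D t)"] FT int2
    by (auto simp: has_integral_integrable integrable_on_cmult_left_iff)
  also have "\<dots> = integral {0..1} (\<lambda>t. pi/2 * norm (D t))"
    by simp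
  also have "\<dots> \<le> integral {0..1} (\<lambda>t. rho_S (g t) * norm (D t))"
    apply (rule integral_le[OF int2 int1])
    using rho_ge(1) im by (fastforce intro: mult_right_mono)
  also have "\<dots> = hyp_length_S g"
    unfolding hyp_length_S_def by (rule integral_cong) (simp add: vd)
  finally show ?thesis .
qed

theorem lemma2:
  fixes lam :: real
  assumes "lam > 0"
  shows "(\<exists>z\<in>{z \<in> strip. d_S z 0 \<le> lam}. cmod z = 2 / pi * lam)
       \<and> (\<forall>z\<in>{z \<in> strip. d_S z 0 \<le> lam}. cmod z \<le> 2 / pi * lam)"
proof
  define z where "z = Complex 0 (2 * lam / pi)"
  define g where "g = (\<lambda>t::real. (1 - of_real t) * z)"
  have zs: "z \<in> strip" by (simp add: z_def strip_def)
  have gd: "(g has_vector_derivative - z) (at t within {0..1})" for t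
    unfolding g_def
    by (auto intro!: derivative_eq_intros simp: has_vector_derivative_def
        has_field_derivative_def[symmetric] scaleR_conv_of_real)
  have gC: "C1_curve_in strip g z 0"
    unfolding C1_curve_in_def
  proof (intro conjI)
    show "\<exists>D. (\<forall>t\<in>{0..1}. (g has_vector_derivative D t) (at t within {0..1})) \<and> continuous_on {0..1} D"
      by (rule exI[of _ "\<lambda>_. - z"]) (auto simp: gd)
    show "g ` {0..1} \<subseteq> strip" by (auto simp: g_def z_def strip_def)
  qed (auto simp: g_def)
  have cz: "cmod z = 2 / pi * lam" using assms by (simp add: z_def cmod_def)
  have "hyp_length_S g = integral {0..1} (\<lambda>t::real. lam)"
    unfolding hyp_length_S_def
  proof (rule integral_cong)
    fix t :: real assume t: "t \<in> {0..1}"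
    have "vector_derivative g (at t within {0..1}) = - z"
      using vector_derivative_within_cbox[of 0 1 t g "- z"] gd t by simp
    moreover have "rho_S (g t) = pi/2" by (simp add: rho_S_def g_def z_def)
    ultimately have "rho_S (g t) * norm (vector_derivative g (at t within {0..1})) = pi/2 * (2 / pi * lam)"
      using cz by (simp only: norm_minus_cancel)
    then show "rho_S (g t) * norm (vector_derivative g (at t within {0..1})) = lam"
      by simp
  qed
  then have hl: "hyp_length_S g = lam" by simp
  have "d_S z 0 \<le> lam"
    unfolding d_S_def
  proof -
    have "(INF g \<in> {g. C1_curve_in strip g z 0}. hyp_length_S g) \<le> hyp_length_S g"
      apply (rule cINF_lower)
       apply (rule bdd_belowI[where m="pi/2 * cmod (0 - z)"])
      using length_ge[of _ z 0] gC by auto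
    then show "(INF g \<in> {g. C1_curve_in strip g z 0}. hyp_length_S g) \<le> lam" using hl by simp
  qed
  then show "\<exists>z\<in>{z \<in> strip. d_S z 0 \<le> lam}. cmod z = 2 / pi * lam"
    using zs cz by blast
next
  show "\<forall>z\<in>{z \<in> strip. d_S z 0 \<le> lam}. cmod z \<le> 2 / pi * lam"
  proof safe
    fix w assume w: "w \<in> strip" "d_S w 0 \<le> lam"
    define h where "h = (\<lambda>t::real. (1 - of_real t) * w)"
    have hd: "(h has_vector_derivative - w) (at t within {0..1})" for t
      unfolding h_def
      by (auto intro!: derivative_eq_intros simp: has_vector_derivative_def
          has_field_derivative_def[symmetric] scaleR_conv_of_real)
    have hC: "C1_curve_in strip h w 0"
      unfolding C1_curve_in_def
    proof (intro conjI)
      show "\<exists>D. (\<forall>t\<in>{0..1}. (h has_vector_derivative D t) (at t within {0..1})) \<and> continuous_on {0..1} D"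
        by (rule exI[of _ "\<lambda>_. - w"]) (auto simp: hd)
      show "h ` {0..1} \<subseteq> strip"
      proof
        fix y assume "y \<in> h ` {0..1}"
        then obtain t::real where t: "0 \<le> t" "t \<le> 1" "y = (1 - t) * Re w + \<i> * ((1 - t) * Im w)"
          by (auto simp: h_def complex_eq_iff)
        have "Re y = (1 - t) * Re w" using t by simp
        moreover have "\<bar>(1 - t) * Re w\<bar> < 1"
        proof -
          have "\<bar>Re w\<bar> < 1" using w by (auto simp: strip_def)
          moreover have "\<bar>1 - t\<bar> \<le> 1" using t by auto
          moreover have "\<bar>1 - t\<bar> * \<bar>Re w\<bar> \<le> 1 * \<bar>Re w\<bar>"
            by (rule mult_right_mono) (use t in auto)
          ultimately show ?thesis by (simp add: abs_mult)
        qed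
        ultimately show "y \<in> strip" by (auto simp: strip_def)
      qed
    qed (auto simp: h_def)
    have "pi/2 * cmod w \<le> d_S w 0"
      unfolding d_S_def
      apply (rule cINF_greatest)
      using hC apply blast
      using length_ge[of _ w 0] by simp
    with w have "pi/2 * cmod w \<le> lam" by simp
    then show "cmod w \<le> 2 / pi * lam" by (simp add: field_simps)
  qed
qed

end
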